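(* Let $q$ be a Boolean conjunctive query without self-join. If $q$ is safe, then $\mathsf{CERTAINTY}(q)$ is first-order expressible.
   Context: Relation names have signatures $[n,k]$ ($n\ge k\ge 1$; arity $n$, primary key positions $1,\dots,k$). Atoms have variables or constants as arguments; a fact is an atom without variables; facts are key-equal if they have the same relation name and agree on the primary key. For an atom $F$, $\mathit{key}(F)$ is the set of variables in its primary-key positions and $\mathit{vars}(F)$ the set of its variables. An uncertain database is a finite set of facts; a repair is a maximal subset with no two distinct key-equal facts. A Boolean conjunctive query $q$ is a finite set of atoms (existentially closed conjunction), $\mathit{vars}(q)$ its set of variables; it has a self-join if some relation name occurs in two of its atoms. $\mathsf{CERTAINTY}(q)$ is the set of uncertain databases all of whose repairs satisfy $q$; it is first-order expressible if there is a first-order sentence $\varphi$ such that for every uncertain database ${\mathbf{db}}$, ${\mathbf{db}}\in\mathsf{CERTAINTY}(q)$ iff ${\mathbf{db}}\models\varphi$. For a variable $x$ and constant $a$, $q[x\mapsto a]$ denotes $q$ with every occurrence of $x$ replaced by $a$. Safety: $q$ is safe iff the following procedure $\mathrm{IsSafe}(q)$ returns true, where the rules are tried in order and the first applicable rule is executed ($a$ is an arbitrary fixed constant): (SE1) if $|q|=1$ and $\mathit{vars}(q)=\emptyset$, return true; (SE2) if $q=q_1\cup q_2$ with $q_1\neq\emptyset\neq q_2$ and $\mathit{vars}(q_1)\cap\mathit{vars}(q_2)=\emptyset$, return $\mathrm{IsSafe}(q_1)\wedge\mathrm{IsSafe}(q_2)$; (SE3) if $\bigcap_{F\in q}\mathit{key}(F)\neq\emptyset$,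 select $x$ in this intersection and return $\mathrm{IsSafe}(q[x\mapsto a])$; (SE4) if some $F\in q$ has $\mathit{key}(F)=\emptyset\neq\mathit{vars}(F)$, select such $F$ and some $x\in\mathit{vars}(F)$ and return $\mathrm{IsSafe}(q[x\mapsto a])$; otherwise return false. *)

theory Defs
  imports Main
begin

text \<open>A relation name carries its signature [n,k]: (name, n, k).\<close>
type_synonym 'r relname = "'r \<times> nat \<times> nat"

definition arity :: "'r relname \<Rightarrow> nat" where "arity R = fst (snd R)"
definition keylen :: "'r relname \<Rightarrow> nat" where "keylen R = snd (snd R)"
definition valid_sig :: "'r relname \<Rightarrow> bool" where
  "valid_sig R \<longleftrightarrow> 1 \<le> keylen R \<and> keylen R \<le> arity R"

datatype ('v, 'c) trm = Var 'v | Cst 'c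

type_synonym ('r, 'v, 'c) atom = "'r relname \<times> ('v, 'c) trm list"
type_synonym ('r, 'c) fact = "'r relname \<times> 'c list"

definition wf_atom :: "('r, 'v, 'c) atom \<Rightarrow> bool" where
  "wf_atom F \<longleftrightarrow> valid_sig (fst F) \<and> length (snd F) = arity (fst F)"

definition wf_fact :: "('r, 'c) fact \<Rightarrow> bool" where
  "wf_fact f \<longleftrightarrow> valid_sig (fst f) \<and> length (snd f) = arity (fst f)"

definition key_vars :: "('r, 'v, 'c) atom \<Rightarrow> 'v set" where
  "key_vars F = {x. Var x \<in> set (take (keylen (fst F)) (snd F))}"

definition atom_vars :: "('r, 'v, 'c) atom \<Rightarrow> 'v set" where
  "atom_vars F = {x. Var x \<in> set (snd F)}"

definition key_equal :: "('r, 'c) fact \<Rightarrow> ('r, 'c) fact \<Rightarrow> bool" where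
  "key_equal f g \<longleftrightarrow> fst f = fst g \<and>
     take (keylen (fst f)) (snd f) = take (keylen (fst g)) (snd g)"

definition uncertain_db :: "('r, 'c) fact set \<Rightarrow> bool" where
  "uncertain_db db \<longleftrightarrow> finite db \<and> (\<forall>f\<in>db. wf_fact f)"

definition consistent :: "('r, 'c) fact set \<Rightarrow> bool" where
  "consistent r \<longleftrightarrow> (\<forall>f\<in>r. \<forall>g\<in>r. key_equal f g \<longrightarrow> f = g)"

definition is_repair :: "('r, 'c) fact set \<Rightarrow> ('r, 'c) fact set \<Rightarrow> bool" where
  "is_repair db r \<longleftrightarrow> r \<subseteq> db \<and> consistent r \<and>
     (\<forall>r'. r \<subseteq> r' \<and> r' \<subseteq> db \<and> consistent r' \<longrightarrow> r' = r)"

type_synonym ('r, 'v, 'c) query = "('r, 'v, 'c) atom set"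

definition wf_query :: "('r, 'v, 'c) query \<Rightarrow> bool" where
  "wf_query q \<longleftrightarrow> finite q \<and> (\<forall>F\<in>q. wf_atom F)"

definition query_vars :: "('r, 'v, 'c) query \<Rightarrow> 'v set" where
  "query_vars q = (\<Union>F\<in>q. atom_vars F)"

definition self_join_free :: "('r, 'v, 'c) query \<Rightarrow> bool" where
  "self_join_free q \<longleftrightarrow> (\<forall>F\<in>q. \<forall>G\<in>q. fst F = fst G \<longrightarrow> F = G)"

fun inst_trm :: "('v \<Rightarrow> 'c) \<Rightarrow> ('v, 'c) trm \<Rightarrow> 'c" where
  "inst_trm \<theta> (Var x) = \<theta> x"
| "inst_trm \<theta> (Cst c) = c"

definition satisfies :: "('r, 'c) fact set \<Rightarrow> ('r, 'v, 'c) query \<Rightarrow> bool" where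
  "satisfies db q \<longleftrightarrow> (\<exists>\<theta>. \<forall>F\<in>q. (fst F, map (inst_trm \<theta>) (snd F)) \<in> db)"

definition CERTAINTY :: "('r, 'v, 'c) query \<Rightarrow> ('r, 'c) fact set set" where
  "CERTAINTY q = {db. uncertain_db db \<and> (\<forall>r. is_repair db r \<longrightarrow> satisfies r q)}"

text \<open>First-order formulas over the relation names, with equality and constants;
  formula variables are natural numbers. Quantifiers range over all constants.\<close>

datatype ('r, 'c) fo =
    FAtom "'r relname" "(nat, 'c) trm list"
  | FEq "(nat, 'c) trm" "(nat, 'c) trm"
  | FNeg "('r, 'c) fo"
  | FConj "('r, 'c) fo" "('r, 'c) fo"
  | FEx nat "('r, 'c) fo"

fun trm_fv :: "(nat, 'c) trm \<Rightarrow> nat set" where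
  "trm_fv (Var x) = {x}"
| "trm_fv (Cst c) = {}"

fun fv :: "('r, 'c) fo \<Rightarrow> nat set" where
  "fv (FAtom R ts) = (\<Union>t\<in>set ts. trm_fv t)"
| "fv (FEq s t) = trm_fv s \<union> trm_fv t"
| "fv (FNeg \<phi>) = fv \<phi>"
| "fv (FConj \<phi> \<psi>) = fv \<phi> \<union> fv \<psi>"
| "fv (FEx x \<phi>) = fv \<phi> - {x}"

fun holds :: "('r, 'c) fact set \<Rightarrow> (nat \<Rightarrow> 'c) \<Rightarrow> ('r, 'c) fo \<Rightarrow> bool" where
  "holds db \<sigma> (FAtom R ts) \<longleftrightarrow> (R, map (inst_trm \<sigma>) ts) \<in> db"
| "holds db \<sigma> (FEq s t) \<longleftrightarrow> inst_trm \<sigma> s = inst_trm \<sigma> t"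
| "holds db \<sigma> (FNeg \<phi>) \<longleftrightarrow> \<not> holds db \<sigma> \<phi>"
| "holds db \<sigma> (FConj \<phi> \<psi>) \<longleftrightarrow> holds db \<sigma> \<phi> \<and> holds db \<sigma> \<psi>"
| "holds db \<sigma> (FEx x \<phi>) \<longleftrightarrow> (\<exists>c. holds db (\<sigma>(x := c)) \<phi>)"

definition sentence :: "('r, 'c) fo \<Rightarrow> bool" where
  "sentence \<phi> \<longleftrightarrow> fv \<phi> = {}"

definition models :: "('r, 'c) fact set \<Rightarrow> ('r, 'c) fo \<Rightarrow> bool" where
  "models db \<phi> \<longleftrightarrow> (\<forall>\<sigma>. holds db \<sigma> \<phi>)"

definition fo_expressible :: "('r, 'v, 'c) query \<Rightarrow> bool" where
  "fo_expressible q \<longleftrightarrow> (\<exists>\<phi> :: ('r, 'c) fo. sentence \<phi> \<and>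
     (\<forall>db. uncertain_db db \<longrightarrow> (db \<in> CERTAINTY q \<longleftrightarrow> models db \<phi>)))"

fun subst_trm :: "'v \<Rightarrow> 'c \<Rightarrow> ('v, 'c) trm \<Rightarrow> ('v, 'c) trm" where
  "subst_trm x a (Var y) = (if y = x then Cst a else Var y)"
| "subst_trm x a (Cst c) = Cst c"

definition subst_query :: "'v \<Rightarrow> 'c \<Rightarrow> ('r, 'v, 'c) query \<Rightarrow> ('r, 'v, 'c) query" where
  "subst_query x a q = (\<lambda>F. (fst F, map (subst_trm x a) (snd F))) ` q"

definition SE1_cond :: "('r, 'v, 'c) query \<Rightarrow> bool" where
  "SE1_cond q \<longleftrightarrow> card q = 1 \<and> query_vars q = {}"

definition SE2_cond :: "('r, 'v, 'c) query \<Rightarrow> bool" where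
  "SE2_cond q \<longleftrightarrow> (\<exists>q1 q2. q = q1 \<union> q2 \<and> q1 \<noteq> {} \<and> q2 \<noteq> {} \<and>
      query_vars q1 \<inter> query_vars q2 = {})"

definition SE3_cond :: "('r, 'v, 'c) query \<Rightarrow> bool" where
  "SE3_cond q \<longleftrightarrow> q \<noteq> {} \<and> (\<Inter>F\<in>q. key_vars F) \<noteq> {}"

definition SE4_cond :: "('r, 'v, 'c) query \<Rightarrow> bool" where
  "SE4_cond q \<longleftrightarrow> (\<exists>F\<in>q. key_vars F = {} \<and> atom_vars F \<noteq> {})"

text \<open>IsSafe(q) returns true for some execution of the (nondeterministic) procedure;
  rules are tried in order and the first applicable one is executed.\<close>
inductive is_safe :: "('r, 'v, 'c) query \<Rightarrow> bool" where
  SE1: "SE1_cond q \<Longrightarrow> is_safe q"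
| SE2: "\<not> SE1_cond q \<Longrightarrow> q = q1 \<union> q2 \<Longrightarrow> q1 \<noteq> {} \<Longrightarrow> q2 \<noteq> {} \<Longrightarrow>
        query_vars q1 \<inter> query_vars q2 = {} \<Longrightarrow> is_safe q1 \<Longrightarrow> is_safe q2 \<Longrightarrow> is_safe q"
| SE3: "\<not> SE1_cond q \<Longrightarrow> \<not> SE2_cond q \<Longrightarrow> q \<noteq> {} \<Longrightarrow> x \<in> (\<Inter>F\<in>q. key_vars F) \<Longrightarrow>
        is_safe (subst_query x a q) \<Longrightarrow> is_safe q"
| SE4: "\<not> SE1_cond q \<Longrightarrow> \<not> SE2_cond q \<Longrightarrow> \<not> SE3_cond q \<Longrightarrow> F \<in> q \<Longrightarrow>
        key_vars F = {} \<Longrightarrow> x \<in> atom_vars F \<Longrightarrow>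
        is_safe (subst_query x a q) \<Longrightarrow> is_safe q"

end

theory Submission
  imports Defs
begin


section \<open>Repairs\<close>

lemma key_equal_refl: "key_equal f f" by (simp add: key_equal_def)
lemma key_equal_sym: "key_equal f g \<Longrightarrow> key_equal g f" by (auto simp: key_equal_def)
lemma key_equal_trans: "key_equal f g \<Longrightarrow> key_equal g h \<Longrightarrow> key_equal f h" by (auto simp: key_equal_def)

lemma repair_char:
  "is_repair db r \<longleftrightarrow> r \<subseteq> db \<and> consistent r \<and> (\<forall>f\<in>db. \<exists>g\<in>r. key_equal f g)"
proof
  assume R: "is_repair db r"
  hence sub: "r \<subseteq> db" and con: "consistent r" by (auto simp: is_repair_def)
  have "\<exists>g\<in>r. key_equal f g" if f: "f \<in> db" for f
  proof (rule ccontr)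
    assume N: "\<not> (\<exists>g\<in>r. key_equal f g)"
    have "consistent (insert f r)"
      using con N key_equal_sym unfolding consistent_def by blast
    hence "insert f r = r" using R f unfolding is_repair_def by blast
    hence "f \<in> r" by blast
    thus False using N key_equal_refl by blast
  qed
  thus "r \<subseteq> db \<and> consistent r \<and> (\<forall>f\<in>db. \<exists>g\<in>r. key_equal f g)" using sub con by blast
next
  assume A: "r \<subseteq> db \<and> consistent r \<and> (\<forall>f\<in>db. \<exists>g\<in>r. key_equal f g)"
  show "is_repair db r" unfolding is_repair_def
  proof (intro conjI allI impI)
    fix r' assume B: "r \<subseteq> r' \<and> r' \<subseteq> db \<and> consistent r'"
    show "r' = r"
    proof
      show "r' \<subseteq> r"
      proof
        fix f assume "f \<in> r'"
        then obtain g where "g \<in> r" "key_equal f g" using A B by blast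
        thus "f \<in> r" using B \<open>f \<in> r'\<close> unfolding consistent_def by blast
      qed
    qed (use B in auto)
  qed (use A in auto)
qed

lemma repair_ext:
  assumes "finite db" "s \<subseteq> db" "consistent s"
  shows "\<exists>r. is_repair db r \<and> s \<subseteq> r"
proof -
  let ?C = "{r. s \<subseteq> r \<and> r \<subseteq> db \<and> consistent r}"
  have "finite ?C" using assms(1) by (rule finite_subset[rotated, OF finite_Pow_iff[THEN iffD2]]) auto
  moreover have "s \<in> ?C" using assms by auto
  ultimately obtain m where m: "m \<in> ?C" "\<forall>b\<in>?C. m \<le> b \<longrightarrow> m = b"
    using finite_has_maximal[of ?C] by blast
  hence "is_repair db m" unfolding is_repair_def using m by auto
  thus ?thesis using m by auto
qed

lemma repair_exists: "finite db \<Longrightarrow> \<exists>r. is_repair db r"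
  using repair_ext[of db "{}"] by (auto simp: consistent_def)


lemma inst_subst_eq: "\<theta> x = c \<Longrightarrow> inst_trm \<theta> (subst_trm x c t) = inst_trm \<theta> t"
  by (cases t) auto

lemma inst_upd_subst: "inst_trm (\<theta>(x:=c)) t = inst_trm \<theta> (subst_trm x c t)"
  by (cases t) auto

lemma inst_upd_subst': "inst_trm (\<theta>(x:=c)) = inst_trm \<theta> \<circ> subst_trm x c"
  by (rule ext) (simp add: inst_upd_subst)

lemma sat_subst_imp: "satisfies r (subst_query x c Q) \<Longrightarrow> satisfies r Q"
proof -
  assume "satisfies r (subst_query x c Q)"
  then obtain \<theta> where th: "\<forall>F\<in>subst_query x c Q. (fst F, map (inst_trm \<theta>) (snd F)) \<in> r"
    unfolding satisfies_def by blast
  have "(fst F, map (inst_trm (\<theta>(x:=c))) (snd F)) \<in> r" if "F \<in> Q" for F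
  proof -
    have "(fst F, map (subst_trm x c) (snd F)) \<in> subst_query x c Q"
      using that unfolding subst_query_def by force
    hence "(fst F, map (inst_trm \<theta>) (map (subst_trm x c) (snd F))) \<in> r" using th by force
    thus ?thesis by (simp add: inst_upd_subst')
  qed
  thus ?thesis unfolding satisfies_def by blast
qed

lemma sat_subst:
  assumes "\<forall>F\<in>Q. (fst F, map (inst_trm \<theta>) (snd F)) \<in> r" "\<theta> x = c"
  shows "satisfies r (subst_query x c Q)"
  unfolding satisfies_def
proof (intro exI[of _ \<theta>] ballI)
  fix G assume "G \<in> subst_query x c Q"
  then obtain F where F: "F \<in> Q" "G = (fst F, map (subst_trm x c) (snd F))"
    unfolding subst_query_def by auto
  have "map (inst_trm \<theta>) (snd G) = map (inst_trm \<theta>) (snd F)"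
    using F(2) assms(2) by (simp add: inst_subst_eq)
  hence "(fst G, map (inst_trm \<theta>) (snd G)) = (fst F, map (inst_trm \<theta>) (snd F))"
    using F(2) by simp
  thus "(fst G, map (inst_trm \<theta>) (snd G)) \<in> r" using assms(1) F(1) by metis
qed

lemma inst_cong_atom:
  "(\<forall>y\<in>atom_vars F. \<theta> y = \<theta>' y) \<Longrightarrow> map (inst_trm \<theta>) (snd F) = map (inst_trm \<theta>') (snd F)"
proof (rule map_cong[OF refl])
  fix t assume A: "\<forall>y\<in>atom_vars F. \<theta> y = \<theta>' y" and t: "t \<in> set (snd F)"
  show "inst_trm \<theta> t = inst_trm \<theta>' t"
    using A t by (cases t) (auto simp: atom_vars_def)
qed

lemma sat_union:
  assumes "query_vars Q1 \<inter> query_vars Q2 = {}"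
  shows "satisfies r (Q1 \<union> Q2) \<longleftrightarrow> satisfies r Q1 \<and> satisfies r Q2"
proof
  assume "satisfies r (Q1 \<union> Q2)" thus "satisfies r Q1 \<and> satisfies r Q2"
    unfolding satisfies_def by blast
next
  assume "satisfies r Q1 \<and> satisfies r Q2"
  then obtain \<theta>1 \<theta>2 where t1: "\<forall>F\<in>Q1. (fst F, map (inst_trm \<theta>1) (snd F)) \<in> r"
    and t2: "\<forall>F\<in>Q2. (fst F, map (inst_trm \<theta>2) (snd F)) \<in> r"
    unfolding satisfies_def by blast
  define \<theta> where "\<theta> = (\<lambda>v. if v \<in> query_vars Q1 then \<theta>1 v else \<theta>2 v)"
  have "(fst F, map (inst_trm \<theta>) (snd F)) \<in> r" if "F \<in> Q1 \<union> Q2" for F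
  proof (cases "F \<in> Q1")
    case True
    hence "\<forall>y\<in>atom_vars F. \<theta> y = \<theta>1 y" unfolding \<theta>_def query_vars_def by auto
    thus ?thesis using t1 True inst_cong_atom by metis
  next
    case False
    hence F2: "F \<in> Q2" using that by auto
    hence "\<forall>y\<in>atom_vars F. \<theta> y = \<theta>2 y" using assms unfolding \<theta>_def query_vars_def by auto
    thus ?thesis using t2 F2 inst_cong_atom by metis
  qed
  thus "satisfies r (Q1 \<union> Q2)" unfolding satisfies_def by blast
qed

lemma cert_union:
  assumes "query_vars Q1 \<inter> query_vars Q2 = {}"
  shows "db \<in> CERTAINTY (Q1 \<union> Q2) \<longleftrightarrow> db \<in> CERTAINTY Q1 \<and> db \<in> CERTAINTY Q2"
  using sat_union[OF assms] unfolding CERTAINTY_def by blast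




section \<open>SE3\<close>

lemma se3_sem:
  fixes Q :: "('r, 'v, 'c) query"
  assumes sjf: "self_join_free Q" and kx: "\<forall>F\<in>Q. x \<in> key_vars F"
  shows "(\<forall>r. is_repair db r \<longrightarrow> satisfies r Q) \<longleftrightarrow>
         (\<exists>c. \<forall>r. is_repair db r \<longrightarrow> satisfies r (subst_query x c Q))"
proof
  assume A: "\<forall>r. is_repair db r \<longrightarrow> satisfies r Q"
  show "\<exists>c. \<forall>r. is_repair db r \<longrightarrow> satisfies r (subst_query x c Q)"
  proof (rule ccontr)
    assume "\<not> ?thesis"
    hence "\<forall>c. \<exists>r. is_repair db r \<and> \<not> satisfies r (subst_query x c Q)" by blast
    hence "\<exists>rc. \<forall>c. is_repair db (rc c) \<and> \<not> satisfies (rc c) (subst_query x c Q)"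
      by (rule choice)
    then obtain rc where rc0: "\<forall>c. is_repair db (rc c) \<and> \<not> satisfies (rc c) (subst_query x c Q)"
      by blast
    have rc: "is_repair db (rc c) \<and> \<not> satisfies (rc c) (subst_query x c Q)" for c
      using rc0 by blast
    define Fof where "Fof R = (THE F. F \<in> Q \<and> fst F = R)" for R
    define ix where "ix R = (SOME i. i < keylen R \<and> i < length (snd (Fof R)) \<and> snd (Fof R) ! i = Var x)" for R
    define sel where "sel g = (if ix (fst g) < keylen (fst g) then snd g ! ix (fst g) else undefined)" for g :: "('r,'c) fact"
    have selk: "sel g = sel g'" if "key_equal g g'" for g g'
    proof -
      have e: "fst g = fst g'" "take (keylen (fst g)) (snd g) = take (keylen (fst g)) (snd g')"
        using that unfolding key_equal_def by auto
      show ?thesis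
      proof (cases "ix (fst g) < keylen (fst g)")
        case True
        have "snd g ! ix (fst g) = take (keylen (fst g)) (snd g) ! ix (fst g)" using True by simp
        also have "\<dots> = snd g' ! ix (fst g)" using True e by simp
        finally show ?thesis unfolding sel_def using e True by simp
      next
        case False thus ?thesis unfolding sel_def using e by simp
      qed
    qed
    define r where "r = {g\<in>db. g \<in> rc (sel g)}"
    have rep: "is_repair db r" unfolding repair_char
    proof (intro conjI ballI)
      show "r \<subseteq> db" unfolding r_def by auto
      show "consistent r" unfolding consistent_def
      proof (intro ballI impI)
        fix f g assume "f \<in> r" "g \<in> r" "key_equal f g"
        hence "f \<in> rc (sel f)" "g \<in> rc (sel f)" using selk[of f g] unfolding r_def by auto
        moreover have "consistent (rc (sel f))" using rc[of "sel f"] unfolding is_repair_def by blast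
        ultimately show "f = g" using \<open>key_equal f g\<close> unfolding consistent_def by blast
      qed
      fix f assume "f \<in> db"
      then obtain g where g: "g \<in> rc (sel f)" "key_equal f g"
        using rc[of "sel f"] unfolding repair_char by blast
      hence "g \<in> db" using rc[of "sel f"] unfolding repair_char by blast
      moreover have "sel g = sel f" using selk g(2) by metis
      ultimately have "g \<in> r" using g unfolding r_def by auto
      thus "\<exists>g\<in>r. key_equal f g" using g by blast
    qed
    then obtain \<theta> where th: "\<forall>F\<in>Q. (fst F, map (inst_trm \<theta>) (snd F)) \<in> r"
      using A unfolding satisfies_def by blast
    have "(fst F, map (inst_trm \<theta>) (snd F)) \<in> rc (\<theta> x)" if F: "F \<in> Q" for F
    proof -
      have FF: "Fof (fst F) = F" unfolding Fof_def
        using F sjf unfolding self_join_free_def by (intro the_equality) auto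
      have "Var x \<in> set (take (keylen (fst F)) (snd F))" using kx F unfolding key_vars_def by auto
      then obtain i where i: "i < keylen (fst F)" "i < length (snd F)" "snd F ! i = Var x"
        by (auto simp: in_set_conv_nth)
      have ex: "\<exists>j. j < keylen (fst F) \<and> j < length (snd F) \<and> snd F ! j = Var x" using i by blast
      have ixp: "ix (fst F) < keylen (fst F) \<and> ix (fst F) < length (snd F) \<and> snd F ! ix (fst F) = Var x"
        unfolding ix_def FF by (rule someI_ex[OF ex])
      have "sel (fst F, map (inst_trm \<theta>) (snd F)) = \<theta> x"
        using ixp unfolding sel_def by simp
      moreover have "(fst F, map (inst_trm \<theta>) (snd F)) \<in> r" using th F by blast
      ultimately show ?thesis unfolding r_def by simp
    qed
    hence "\<forall>F\<in>Q. (fst F, map (inst_trm \<theta>) (snd F)) \<in> rc (\<theta> x)" by blast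
    hence "satisfies (rc (\<theta> x)) (subst_query x (\<theta> x) Q)"
      using sat_subst[of Q \<theta> "rc (\<theta> x)" x "\<theta> x"] by blast
    thus False using rc by blast
  qed
next
  assume "\<exists>c. \<forall>r. is_repair db r \<longrightarrow> satisfies r (subst_query x c Q)"
  then obtain c where c: "\<forall>r. is_repair db r \<longrightarrow> satisfies r (subst_query x c Q)" by blast
  show "\<forall>r. is_repair db r \<longrightarrow> satisfies r Q"
  proof (intro allI impI)
    fix r assume "is_repair db r"
    hence "satisfies r (subst_query x c Q)" using c by blast
    thus "satisfies r Q" by (rule sat_subst_imp)
  qed
qed





section \<open>SE4 and SE1\<close>

lemma map_inst_Cst[simp]: "map (inst_trm \<theta>) (map Cst cs) = cs"
  by (induction cs) auto

lemma inst_Cst_comp[simp]: "inst_trm \<theta> \<circ> Cst = (\<lambda>x. x)"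
  by auto

lemma se4_sem:
  fixes Q :: "('r, 'v, 'c) query"
  assumes udb: "uncertain_db db" and F: "F \<in> Q" "fst F = R"
    and kF: "take (keylen R) (snd F) = map Cst kc"
    and i: "i < length (snd F)" "snd F ! i = Var x"
  defines "inB \<equiv> \<lambda>g :: ('r,'c) fact. fst g = R \<and> take (keylen R) (snd g) = kc"
  shows "(\<forall>r. is_repair db r \<longrightarrow> satisfies r Q) \<longleftrightarrow>
    (\<exists>g\<in>db. inB g) \<and> (\<forall>c. (\<exists>g\<in>db. inB g \<and> snd g ! i = c) \<longrightarrow>
        (\<forall>r. is_repair {g\<in>db. inB g \<longrightarrow> snd g ! i = c} r \<longrightarrow> satisfies r (subst_query x c Q)))"
proof
  have inBF: "inB (R, map (inst_trm \<theta>) (snd F))" for \<theta>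
    unfolding inB_def using kF by (simp add: take_map)
  assume A: "\<forall>r. is_repair db r \<longrightarrow> satisfies r Q"
  have fin: "finite db" using udb unfolding uncertain_db_def by blast
  obtain r0 where r0: "is_repair db r0" using repair_exists[OF fin] by blast
  then obtain \<theta> where "\<forall>F\<in>Q. (fst F, map (inst_trm \<theta>) (snd F)) \<in> r0"
    using A unfolding satisfies_def by blast
  hence "(R, map (inst_trm \<theta>) (snd F)) \<in> db" using F r0 unfolding is_repair_def by force
  hence ex: "\<exists>g\<in>db. inB g" using inBF by blast
  have "satisfies r (subst_query x c Q)"
    if g: "g \<in> db" "inB g" "snd g ! i = c" and r: "is_repair {g\<in>db. inB g \<longrightarrow> snd g ! i = c} r" for c g r
  proof -
    let ?dbc = "{g\<in>db. inB g \<longrightarrow> snd g ! i = c}"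
    have rdb: "is_repair db r" unfolding repair_char
    proof (intro conjI ballI)
      show "r \<subseteq> db" using r unfolding repair_char by blast
      show "consistent r" using r unfolding repair_char by blast
      fix f assume f: "f \<in> db"
      show "\<exists>h\<in>r. key_equal f h"
      proof (cases "inB f \<longrightarrow> snd f ! i = c")
        case True thus ?thesis using f r unfolding repair_char by blast
      next
        case False
        hence "key_equal f g" using g unfolding inB_def key_equal_def by auto
        moreover have "g \<in> ?dbc" using g by auto
        then obtain h where "h \<in> r" "key_equal g h" using r unfolding repair_char by blast
        ultimately show ?thesis using key_equal_trans by blast
      qed
    qed
    then obtain \<theta> where th: "\<forall>F\<in>Q. (fst F, map (inst_trm \<theta>) (snd F)) \<in> r"
      using A unfolding satisfies_def by blast
    hence "(R, map (inst_trm \<theta>) (snd F)) \<in> ?dbc" using F r unfolding repair_char by force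
    hence "map (inst_trm \<theta>) (snd F) ! i = c" using inBF by auto
    hence "\<theta> x = c" using i by simp
    thus ?thesis using th sat_subst[of Q \<theta> r x c] by blast
  qed
  thus "(\<exists>g\<in>db. inB g) \<and> (\<forall>c. (\<exists>g\<in>db. inB g \<and> snd g ! i = c) \<longrightarrow>
        (\<forall>r. is_repair {g\<in>db. inB g \<longrightarrow> snd g ! i = c} r \<longrightarrow> satisfies r (subst_query x c Q)))"
    using ex by blast
next
  assume B: "(\<exists>g\<in>db. inB g) \<and> (\<forall>c. (\<exists>g\<in>db. inB g \<and> snd g ! i = c) \<longrightarrow>
        (\<forall>r. is_repair {g\<in>db. inB g \<longrightarrow> snd g ! i = c} r \<longrightarrow> satisfies r (subst_query x c Q)))"
  show "\<forall>r. is_repair db r \<longrightarrow> satisfies r Q"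
  proof (intro allI impI)
    fix r assume r: "is_repair db r"
    obtain g0 where g0: "g0 \<in> db" "inB g0" using B by blast
    then obtain h where h: "h \<in> r" "key_equal g0 h" using r unfolding repair_char by blast
    have hdb: "h \<in> db" using h r unfolding repair_char by blast
    have inBh: "inB h" using h(2) g0(2) unfolding inB_def key_equal_def by auto
    let ?c = "snd h ! i"
    have "is_repair {g\<in>db. inB g \<longrightarrow> snd g ! i = ?c} r" unfolding repair_char
    proof (intro conjI ballI)
      have con: "consistent r" using r unfolding repair_char by blast
      show "consistent r" by (rule con)
      show "r \<subseteq> {g\<in>db. inB g \<longrightarrow> snd g ! i = ?c}"
      proof
        fix f assume f: "f \<in> r"
        have "inB f \<Longrightarrow> f = h"
          using con f h(1) inBh unfolding consistent_def inB_def key_equal_def by auto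
        thus "f \<in> {g\<in>db. inB g \<longrightarrow> snd g ! i = ?c}" using f r unfolding repair_char by auto
      qed
      fix f assume "f \<in> {g\<in>db. inB g \<longrightarrow> snd g ! i = ?c}"
      thus "\<exists>h\<in>r. key_equal f h" using r unfolding repair_char by blast
    qed
    hence "satisfies r (subst_query x ?c Q)" using B hdb inBh by blast
    thus "satisfies r Q" by (rule sat_subst_imp)
  qed
qed

lemma se1_sem:
  fixes Q :: "('r, 'v, 'c) query"
  assumes udb: "uncertain_db db" and Q: "Q = {(R, map Cst cs)}"
  defines "inB \<equiv> \<lambda>g :: ('r,'c) fact. fst g = R \<and> take (keylen R) (snd g) = take (keylen R) cs"
  shows "(\<forall>r. is_repair db r \<longrightarrow> satisfies r Q) \<longleftrightarrow>
    (\<exists>g\<in>db. inB g) \<and> (\<forall>g\<in>db. inB g \<longrightarrow> g = (R, cs))"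
proof
  have fin: "finite db" using udb unfolding uncertain_db_def by blast
  have satQ: "satisfies r Q \<longleftrightarrow> (R, cs) \<in> r" for r
    unfolding satisfies_def Q by simp
  assume A: "\<forall>r. is_repair db r \<longrightarrow> satisfies r Q"
  obtain r0 where r0: "is_repair db r0" using repair_exists[OF fin] by blast
  hence "(R, cs) \<in> db" using A satQ unfolding is_repair_def by blast
  moreover have "inB (R, cs)" unfolding inB_def by simp
  moreover have "g = (R, cs)" if g: "g \<in> db" "inB g" for g
  proof -
    obtain r where r: "is_repair db r" "{g} \<subseteq> r"
      using repair_ext[OF fin, of "{g}"] g by (auto simp: consistent_def)
    hence "(R, cs) \<in> r" using A satQ by blast
    moreover have "key_equal g (R, cs)" using g unfolding inB_def key_equal_def by auto
    ultimately show ?thesis using r unfolding is_repair_def consistent_def by blast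
  qed
  ultimately show "(\<exists>g\<in>db. inB g) \<and> (\<forall>g\<in>db. inB g \<longrightarrow> g = (R, cs))" by blast
next
  assume B: "(\<exists>g\<in>db. inB g) \<and> (\<forall>g\<in>db. inB g \<longrightarrow> g = (R, cs))"
  show "\<forall>r. is_repair db r \<longrightarrow> satisfies r Q"
  proof (intro allI impI)
    fix r assume r: "is_repair db r"
    obtain g0 where g0: "g0 \<in> db" "inB g0" using B by blast
    then obtain h where h: "h \<in> r" "key_equal g0 h" using r unfolding repair_char by blast
    have hdb: "h \<in> db" using h r unfolding repair_char by blast
    have inBh: "inB h" using h(2) g0(2) unfolding inB_def key_equal_def by auto
    hence "h = (R, cs)" using B hdb by blast
    thus "satisfies r Q" using h unfolding satisfies_def Q by simp
  qed
qed





section \<open>First-order formula toolkit\<close>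

fun bv :: "('r, 'c) fo \<Rightarrow> nat set" where
  "bv (FAtom R ts) = {}"
| "bv (FEq s t) = {}"
| "bv (FNeg \<phi>) = bv \<phi>"
| "bv (FConj \<phi> \<psi>) = bv \<phi> \<union> bv \<psi>"
| "bv (FEx x \<phi>) = insert x (bv \<phi>)"

definition TT :: "('r, 'c) fo" where "TT = FEq (Cst undefined) (Cst undefined)"
definition FImp :: "('r, 'c) fo \<Rightarrow> ('r, 'c) fo \<Rightarrow> ('r, 'c) fo" where
  "FImp a b = FNeg (FConj a (FNeg b))"
definition FAll :: "nat \<Rightarrow> ('r, 'c) fo \<Rightarrow> ('r, 'c) fo" where
  "FAll x a = FNeg (FEx x (FNeg a))"

fun FConjs :: "('r, 'c) fo list \<Rightarrow> ('r, 'c) fo" where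
  "FConjs [] = TT"
| "FConjs (a # as) = FConj a (FConjs as)"

definition eqs :: "(nat, 'c) trm list \<Rightarrow> (nat, 'c) trm list \<Rightarrow> ('r, 'c) fo" where
  "eqs ts us = FConjs (map (\<lambda>(a, b). FEq a b) (zip ts us))"

fun FExs :: "nat list \<Rightarrow> ('r, 'c) fo \<Rightarrow> ('r, 'c) fo" where
  "FExs [] \<phi> = \<phi>"
| "FExs (y # ys) \<phi> = FEx y (FExs ys \<phi>)"

fun updl :: "(nat \<Rightarrow> 'c) \<Rightarrow> nat list \<Rightarrow> 'c list \<Rightarrow> (nat \<Rightarrow> 'c)" where
  "updl \<sigma> (y # ys) (c # cs) = updl (\<sigma>(y := c)) ys cs"
| "updl \<sigma> _ _ = \<sigma>"

fun restr :: "('r relname \<Rightarrow> (nat, 'c) trm list \<Rightarrow> ('r, 'c) fo) \<Rightarrow> ('r, 'c) fo \<Rightarrow> ('r, 'c) fo" where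
  "restr gd (FAtom R ts) = FConj (FAtom R ts) (gd R ts)"
| "restr gd (FEq s t) = FEq s t"
| "restr gd (FNeg \<phi>) = FNeg (restr gd \<phi>)"
| "restr gd (FConj \<phi> \<psi>) = FConj (restr gd \<phi>) (restr gd \<psi>)"
| "restr gd (FEx x \<phi>) = FEx x (restr gd \<phi>)"

lemma TT_simps[simp]: "holds db \<sigma> TT" "fv TT = {}" "bv TT = {}"
  by (auto simp: TT_def)

lemma FImp_simps[simp]: "holds db \<sigma> (FImp a b) \<longleftrightarrow> (holds db \<sigma> a \<longrightarrow> holds db \<sigma> b)"
  "fv (FImp a b) = fv a \<union> fv b" "bv (FImp a b) = bv a \<union> bv b"
  by (auto simp: FImp_def)

lemma FAll_simps[simp]: "holds db \<sigma> (FAll x a) \<longleftrightarrow> (\<forall>c. holds db (\<sigma>(x:=c)) a)"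
  "fv (FAll x a) = fv a - {x}" "bv (FAll x a) = insert x (bv a)"
  by (auto simp: FAll_def)

lemma FConjs_simps[simp]: "holds db \<sigma> (FConjs ps) \<longleftrightarrow> (\<forall>p\<in>set ps. holds db \<sigma> p)"
  "fv (FConjs ps) = (\<Union>p\<in>set ps. fv p)" "bv (FConjs ps) = (\<Union>p\<in>set ps. bv p)"
  by (induction ps) auto

lemma holds_eqs:
  "length ts = length us \<Longrightarrow> holds db \<sigma> (eqs ts us) \<longleftrightarrow> map (inst_trm \<sigma>) ts = map (inst_trm \<sigma>) us"
proof (induction ts arbitrary: us)
  case Nil thus ?case by (simp add: eqs_def)
next
  case (Cons t ts) thus ?case by (cases us) (auto simp: eqs_def)
qed

lemma fv_eqs: "fv (eqs ts us :: ('r,'c) fo) \<subseteq> (\<Union>t\<in>set ts. trm_fv t) \<union> (\<Union>t\<in>set us. trm_fv t)"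
proof
  fix z assume "z \<in> fv (eqs ts us :: ('r,'c) fo)"
  then obtain a b where ab: "(a, b) \<in> set (zip ts us)" "z \<in> trm_fv a \<union> trm_fv b"
    by (auto simp: eqs_def)
  have "a \<in> set ts" "b \<in> set us" using set_zip_leftD[OF ab(1)] set_zip_rightD[OF ab(1)] by auto
  thus "z \<in> (\<Union>t\<in>set ts. trm_fv t) \<union> (\<Union>t\<in>set us. trm_fv t)" using ab(2) by blast
qed

lemma bv_eqs[simp]: "bv (eqs ts us) = {}"
  by (auto simp: eqs_def)

lemma holds_FExs: "holds db \<sigma> (FExs ys \<phi>) \<longleftrightarrow> (\<exists>cs. length cs = length ys \<and> holds db (updl \<sigma> ys cs) \<phi>)"
proof (induction ys arbitrary: \<sigma>)
  case Nil thus ?case by simp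
next
  case (Cons y ys)
  show ?case
  proof
    assume "holds db \<sigma> (FExs (y # ys) \<phi>)"
    then obtain c where "holds db (\<sigma>(y:=c)) (FExs ys \<phi>)"
      unfolding FExs.simps holds.simps by blast
    then obtain cs where "length cs = length ys" "holds db (updl (\<sigma>(y:=c)) ys cs) \<phi>"
      using Cons.IH[of "\<sigma>(y:=c)"] by blast
    thus "\<exists>cs. length cs = length (y # ys) \<and> holds db (updl \<sigma> (y # ys) cs) \<phi>"
    proof (intro exI[of _ "c # cs"] conjI)
      assume "length cs = length ys" "holds db (updl (\<sigma>(y:=c)) ys cs) \<phi>"
      thus "length (c # cs) = length (y # ys)" by simp
      show "holds db (updl \<sigma> (y # ys) (c # cs)) \<phi>" unfolding updl.simps by fact
    qed
  next
    assume "\<exists>cs. length cs = length (y # ys) \<and> holds db (updl \<sigma> (y # ys) cs) \<phi>"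
    then obtain cs where cs: "length cs = length (y # ys)" "holds db (updl \<sigma> (y # ys) cs) \<phi>" by blast
    then obtain c cs' where cs': "cs = c # cs'" by (cases cs) auto
    have "length cs' = length ys" "holds db (updl (\<sigma>(y:=c)) ys cs') \<phi>"
      using cs unfolding cs' by (simp_all only: updl.simps length_Cons)
    hence "holds db (\<sigma>(y:=c)) (FExs ys \<phi>)" using Cons.IH[of "\<sigma>(y:=c)"] by blast
    thus "holds db \<sigma> (FExs (y # ys) \<phi>)" unfolding FExs.simps holds.simps by blast
  qed
qed

lemma fv_FExs[simp]: "fv (FExs ys \<phi>) = fv \<phi> - set ys"
  by (induction ys) auto

lemma bv_FExs[simp]: "bv (FExs ys \<phi>) = set ys \<union> bv \<phi>"
  by (induction ys) auto

lemma updl_out: "z \<notin> set ys \<Longrightarrow> updl \<sigma> ys cs z = \<sigma> z"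
proof (induction ys arbitrary: \<sigma> cs)
  case Nil thus ?case by simp
next
  case (Cons y ys) thus ?case by (cases cs) auto
qed

lemma updl_map: "distinct ys \<Longrightarrow> length cs = length ys \<Longrightarrow> map (updl \<sigma> ys cs) ys = cs"
proof (induction ys arbitrary: \<sigma> cs)
  case Nil thus ?case by simp
next
  case (Cons y ys)
  then obtain c cs' where cs: "cs = c # cs'" by (cases cs) auto
  have "updl (\<sigma>(y:=c)) ys cs' y = c" using Cons(2) by (simp add: updl_out)
  thus ?case using Cons cs by simp
qed

lemma inst_trm_cong: "(\<forall>z\<in>trm_fv t. \<sigma> z = \<sigma>' z) \<Longrightarrow> inst_trm \<sigma> t = inst_trm \<sigma>' t"
  by (cases t) auto

lemma map_inst_trm_cong:
  "(\<forall>z\<in>(\<Union>t\<in>set ts. trm_fv t). \<sigma> z = \<sigma>' z) \<Longrightarrow> map (inst_trm \<sigma>) ts = map (inst_trm \<sigma>') ts"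
  by (induction ts) (auto intro: inst_trm_cong)

lemma holds_restr:
  assumes gd: "\<And>\<sigma> R ts. holds db \<sigma> (gd R ts) \<longleftrightarrow> P \<sigma> (R, map (inst_trm \<sigma>) ts)"
    and inv: "\<And>y \<sigma> c. y \<in> bv \<phi> \<Longrightarrow> P (\<sigma>(y:=c)) = P \<sigma>"
  shows "holds db \<sigma> (restr gd \<phi>) \<longleftrightarrow> holds {f\<in>db. P \<sigma> f} \<sigma> \<phi>"
  using inv
proof (induction \<phi> arbitrary: \<sigma>)
  case (FEx x \<phi>)
  have 1: "holds db (\<sigma>(x:=c)) (restr gd \<phi>) \<longleftrightarrow> holds {f\<in>db. P (\<sigma>(x:=c)) f} (\<sigma>(x:=c)) \<phi>" for c
    by (rule FEx.IH) (use FEx.prems in auto)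
  have 2: "P (\<sigma>(x:=c)) = P \<sigma>" for c by (rule FEx.prems) simp
  show ?case unfolding restr.simps holds.simps 1 2 ..
qed (auto simp: gd)

lemma fv_restr:
  assumes "\<And>R ts. fv (gd R ts) \<subseteq> (\<Union>t\<in>set ts. trm_fv t) \<union> Z"
  shows "fv (restr gd \<phi>) \<subseteq> fv \<phi> \<union> Z"
  using assms by (induction \<phi>) fastforce+

lemma bv_restr:
  assumes "\<And>R ts. bv (gd R ts) = {}"
  shows "bv (restr gd \<phi>) = bv \<phi>"
  using assms by (induction \<phi>) auto

lemma holds_block:
  assumes wf: "\<forall>g\<in>db. wf_fact g" and kts: "length kts = keylen R"
    and ys: "length ys = arity R - keylen R" "distinct ys" "set ys \<inter> (\<Union>t\<in>set kts. trm_fv t) = {}"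
  shows "holds db \<sigma> (FExs ys (FConj (FAtom R (kts @ map Var ys)) \<psi>)) \<longleftrightarrow>
    (\<exists>g\<in>db. fst g = R \<and> take (keylen R) (snd g) = map (inst_trm \<sigma>) kts \<and>
        holds db (updl \<sigma> ys (drop (keylen R) (snd g))) \<psi>)"
proof -
  have kk: "map (inst_trm (updl \<sigma> ys cs)) kts = map (inst_trm \<sigma>) kts" for cs
  proof (intro map_inst_trm_cong ballI)
    fix z assume "z \<in> (\<Union>t\<in>set kts. trm_fv t)"
    hence "z \<notin> set ys" using ys(3) by blast
    thus "updl \<sigma> ys cs z = \<sigma> z" by (rule updl_out)
  qed
  have vv: "map (inst_trm (updl \<sigma> ys cs)) (map Var ys) = cs" if "length cs = length ys" for cs
    using updl_map[OF ys(2) that] by (simp add: comp_def)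
  show ?thesis
  proof
    assume "holds db \<sigma> (FExs ys (FConj (FAtom R (kts @ map Var ys)) \<psi>))"
    then obtain cs where cs: "length cs = length ys"
      "(R, map (inst_trm \<sigma>) kts @ cs) \<in> db" "holds db (updl \<sigma> ys cs) \<psi>"
      unfolding holds_FExs using kk vv by auto
    thus "\<exists>g\<in>db. fst g = R \<and> take (keylen R) (snd g) = map (inst_trm \<sigma>) kts \<and>
        holds db (updl \<sigma> ys (drop (keylen R) (snd g))) \<psi>"
      using kts by (intro bexI[OF _ cs(2)]) auto
  next
    assume "\<exists>g\<in>db. fst g = R \<and> take (keylen R) (snd g) = map (inst_trm \<sigma>) kts \<and>
        holds db (updl \<sigma> ys (drop (keylen R) (snd g))) \<psi>"
    then obtain g where g: "g \<in> db" "fst g = R" "take (keylen R) (snd g) = map (inst_trm \<sigma>) kts"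
      "holds db (updl \<sigma> ys (drop (keylen R) (snd g))) \<psi>" by blast
    have len: "length (drop (keylen R) (snd g)) = length ys"
      using wf g(1,2) ys(1) unfolding wf_fact_def by auto
    have "g = (R, map (inst_trm \<sigma>) kts @ drop (keylen R) (snd g))"
      using g(2,3) by (metis append_take_drop_id prod.collapse)
    moreover have e: "map (inst_trm (updl \<sigma> ys (drop (keylen R) (snd g)))) (kts @ map Var ys)
        = map (inst_trm \<sigma>) kts @ drop (keylen R) (snd g)"
      unfolding map_append kk vv[OF len] ..
    ultimately have "(R, map (inst_trm (updl \<sigma> ys (drop (keylen R) (snd g)))) (kts @ map Var ys)) \<in> db"
      using g(1) by metis
    thus "holds db \<sigma> (FExs ys (FConj (FAtom R (kts @ map Var ys)) \<psi>))"
      unfolding holds_FExs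
    proof (intro exI[of _ "drop (keylen R) (snd g)"] conjI)
      show "length (drop (keylen R) (snd g)) = length ys" by (rule len)
      show "holds db (updl \<sigma> ys (drop (keylen R) (snd g))) (FConj (FAtom R (kts @ map Var ys)) \<psi>)"
        using \<open>(R, _) \<in> db\<close> g(4) by (simp del: map_append)
    qed
  qed
qed




section \<open>Parameterised queries and shapes\<close>

fun instT :: "(nat \<Rightarrow> 'c) \<Rightarrow> ('v, (nat, 'c) trm) trm \<Rightarrow> ('v, 'c) trm" where
  "instT \<sigma> (Var v) = Var v"
| "instT \<sigma> (Cst t) = Cst (inst_trm \<sigma> t)"

definition instA :: "(nat \<Rightarrow> 'c) \<Rightarrow> ('r, 'v, (nat, 'c) trm) atom \<Rightarrow> ('r, 'v, 'c) atom" where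
  "instA \<sigma> F = (fst F, map (instT \<sigma>) (snd F))"

definition instq :: "(nat \<Rightarrow> 'c) \<Rightarrow> ('r, 'v, (nat, 'c) trm) query \<Rightarrow> ('r, 'v, 'c) query" where
  "instq \<sigma> q = instA \<sigma> ` q"

fun tpar :: "('v, (nat, 'c) trm) trm \<Rightarrow> nat set" where
  "tpar (Var v) = {}"
| "tpar (Cst t) = trm_fv t"

definition params :: "('r, 'v, (nat, 'c) trm) query \<Rightarrow> nat set" where
  "params q = (\<Union>F\<in>q. \<Union>t\<in>set (snd F). tpar t)"

fun tsh :: "('v, 'a) trm \<Rightarrow> 'v option" where
  "tsh (Var x) = Some x"
| "tsh (Cst c) = None"

definition ashape :: "('r, 'v, 'a) atom \<Rightarrow> 'r relname \<times> 'v option list" where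
  "ashape F = (fst F, map tsh (snd F))"

definition shape :: "('r, 'v, 'a) query \<Rightarrow> ('r relname \<times> 'v option list) set" where
  "shape q = ashape ` q"

definition avars :: "'r relname \<times> 'v option list \<Rightarrow> 'v set" where
  "avars s = {x. Some x \<in> set (snd s)}"

definition akvars :: "'r relname \<times> 'v option list \<Rightarrow> 'v set" where
  "akvars s = {x. Some x \<in> set (take (keylen (fst s)) (snd s))}"

definition sa :: "'v \<Rightarrow> 'r relname \<times> 'v option list \<Rightarrow> 'r relname \<times> 'v option list" where
  "sa x s = (fst s, map (\<lambda>ov. if ov = Some x then None else ov) (snd s))"

lemma tsh_Some: "tsh t = Some x \<longleftrightarrow> t = Var x"
  by (cases t) auto

lemma Some_in_tsh_image[simp]: "Some x \<in> tsh ` A \<longleftrightarrow> Var x \<in> A"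
proof
  assume "Some x \<in> tsh ` A"
  then obtain t where "t \<in> A" "Some x = tsh t" by blast
  thus "Var x \<in> A" using tsh_Some[of t x] by simp
next
  assume "Var x \<in> A"
  thus "Some x \<in> tsh ` A" by (rule rev_image_eqI) simp
qed

lemma atom_vars_shape: "atom_vars F = avars (ashape F)"
  unfolding atom_vars_def avars_def ashape_def by simp

lemma key_vars_shape: "key_vars F = akvars (ashape F)"
  unfolding key_vars_def akvars_def ashape_def by (simp add: take_map)

lemma query_vars_shape: "query_vars q = \<Union> (avars ` shape q)"
  unfolding query_vars_def shape_def by (simp add: atom_vars_shape)

lemma fst_ashape[simp]: "fst (ashape F) = fst F"
  by (simp add: ashape_def)

lemma tsh_subst: "tsh (subst_trm x b t) = (if tsh t = Some x then None else tsh t)"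
  by (cases t) auto

lemma shape_subst: "shape (subst_query x b q) = sa x ` shape q"
  unfolding shape_def subst_query_def image_image
  by (intro image_cong refl) (simp add: ashape_def sa_def tsh_subst comp_def)

lemma tsh_instT[simp]: "tsh (instT \<sigma> t) = tsh t"
  by (cases t) auto

lemma ashape_instA[simp]: "ashape (instA \<sigma> F) = ashape F"
  by (simp add: ashape_def instA_def comp_def)

lemma key_vars_instA[simp]: "key_vars (instA \<sigma> F) = key_vars F"
  by (simp add: key_vars_shape)

lemma atom_vars_instA[simp]: "atom_vars (instA \<sigma> F) = atom_vars F"
  by (simp add: atom_vars_shape)

lemma query_vars_instq[simp]: "query_vars (instq \<sigma> q) = query_vars q"
  unfolding query_vars_def instq_def by simp

lemma instq_union: "instq \<sigma> (q1 \<union> q2) = instq \<sigma> q1 \<union> instq \<sigma> q2"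
  unfolding instq_def by auto

lemma instT_subst: "instT \<sigma> (subst_trm x a t) = subst_trm x (inst_trm \<sigma> a) (instT \<sigma> t)"
  by (cases t) auto

lemma instq_subst: "instq \<sigma> (subst_query x a q) = subst_query x (inst_trm \<sigma> a) (instq \<sigma> q)"
  unfolding instq_def subst_query_def image_image
  by (intro image_cong refl) (simp add: instA_def instT_subst comp_def)

lemma tpar_subst: "tpar (subst_trm x (Var n) t) \<subseteq> tpar t \<union> {n}"
  by (cases t) auto

lemma params_subst: "params (subst_query x (Var n) q) \<subseteq> params q \<union> {n}"
  unfolding params_def subst_query_def using tpar_subst by fastforce

lemma instT_fresh: "n \<notin> tpar t \<Longrightarrow> instT (\<sigma>(n:=c)) t = instT \<sigma> t"
  by (cases t) (auto intro: inst_trm_cong)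

lemma instq_fresh: "n \<notin> params q \<Longrightarrow> instq (\<sigma>(n:=c)) q = instq \<sigma> q"
  unfolding instq_def instA_def params_def
  by (intro image_cong refl) (auto intro!: map_cong instT_fresh)

lemma sjf_image: "self_join_free q \<Longrightarrow> (\<And>F. fst (f F) = fst F) \<Longrightarrow> self_join_free (f ` q)"
  unfolding self_join_free_def by auto

lemma sjf_subst: "self_join_free q \<Longrightarrow> self_join_free (subst_query x a q)"
  unfolding subst_query_def by (rule sjf_image) auto

lemma sjf_instq: "self_join_free q \<Longrightarrow> self_join_free (instq \<sigma> q)"
  unfolding instq_def by (rule sjf_image) (auto simp: instA_def)

lemma wf_subst: "wf_query q \<Longrightarrow> wf_query (subst_query x a q)"
  unfolding wf_query_def subst_query_def wf_atom_def by auto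

lemma finite_tpar: "finite (tpar t)"
proof (cases t)
  case (Cst s) thus ?thesis by (cases s) auto
qed auto

lemma finite_params: "wf_query q \<Longrightarrow> finite (params q)"
  unfolding wf_query_def params_def using finite_tpar by blast

lemma fresh_list: "finite (Y :: nat set) \<Longrightarrow> \<exists>ys. length ys = m \<and> distinct ys \<and> set ys \<inter> Y = {}"
proof -
  assume "finite Y"
  define N where "N = Suc (Max (insert 0 Y))"
  have "Y \<subseteq> {..<N}" using \<open>finite Y\<close> unfolding N_def by (auto simp: less_Suc_eq_le)
  thus ?thesis by (intro exI[of _ "[N..<N+m]"]) auto
qed

lemma fresh_var: "finite (Y :: nat set) \<Longrightarrow> \<exists>n. n \<notin> Y"
  using fresh_list[of Y 1] by (auto simp: length_Suc_conv)



definition good :: "('r, 'v, (nat, 'c) trm) query \<Rightarrow> nat set \<Rightarrow> ('r, 'c) fo \<Rightarrow> bool" where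
  "good q X \<phi> \<longleftrightarrow> fv \<phi> \<subseteq> params q \<and> bv \<phi> \<inter> X = {} \<and>
     (\<forall>\<sigma> db. uncertain_db db \<longrightarrow> (db \<in> CERTAINTY (instq \<sigma> q) \<longleftrightarrow> holds db \<sigma> \<phi>))"

lemma params_union: "params (q1 \<union> q2) = params q1 \<union> params q2"
  unfolding params_def by auto

lemma good_SE2:
  assumes "q = qa \<union> qb" "query_vars qa \<inter> query_vars qb = {}" "good qa X \<phi>a" "good qb X \<phi>b"
  shows "good q X (FConj \<phi>a \<phi>b)"
proof -
  have "db \<in> CERTAINTY (instq \<sigma> q) \<longleftrightarrow> db \<in> CERTAINTY (instq \<sigma> qa) \<and> db \<in> CERTAINTY (instq \<sigma> qb)" for \<sigma> db
    unfolding assms(1) instq_union using assms(2) by (intro cert_union) simp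
  moreover have "params q = params qa \<union> params qb" using assms(1) params_union by simp
  ultimately show ?thesis using assms unfolding good_def by auto
qed

lemma good_SE3:
  fixes q :: "('r, 'v, (nat, 'c) trm) query"
  assumes sjf: "self_join_free q" and kx: "\<forall>F\<in>q. x \<in> key_vars F"
    and n: "n \<notin> params q" "n \<notin> X"
    and g: "good (subst_query x (Var n) q) (insert n X) \<phi>"
  shows "good q X (FEx n \<phi>)"
  unfolding good_def
proof (intro conjI allI impI)
  show "fv (FEx n \<phi>) \<subseteq> params q" using g params_subst[of x n q] unfolding good_def by auto
  show "bv (FEx n \<phi>) \<inter> X = {}" using g n unfolding good_def by auto
  fix \<sigma> :: "nat \<Rightarrow> 'c" and db :: "('r, 'c) fact set" assume udb: "uncertain_db db"
  have e: "instq (\<sigma>(n:=c)) (subst_query x (Var n) q) = subst_query x c (instq \<sigma> q)" for c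
    unfolding instq_subst instq_fresh[OF n(1)] by simp
  have h: "holds db \<sigma> (FEx n \<phi>) \<longleftrightarrow> (\<exists>c. db \<in> CERTAINTY (subst_query x c (instq \<sigma> q)))"
    using g udb unfolding good_def e[symmetric] by simp
  have kx': "\<forall>F\<in>instq \<sigma> q. x \<in> key_vars F" using kx unfolding instq_def by auto
  show "db \<in> CERTAINTY (instq \<sigma> q) \<longleftrightarrow> holds db \<sigma> (FEx n \<phi>)"
    unfolding h CERTAINTY_def using se3_sem[OF sjf_instq[OF sjf] kx', of db] udb by auto
qed


fun unC :: "('v, 'a) trm \<Rightarrow> 'a" where
  "unC (Cst c) = c"
| "unC (Var v) = undefined"

lemma all_Cst: "(\<forall>t\<in>set l. \<exists>c. t = Cst c) \<Longrightarrow> l = map Cst (map unC l)"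
  by (induction l) auto

lemma instT_map_Cst: "map (instT \<sigma>) (map Cst ts) = map Cst (map (inst_trm \<sigma>) ts)"
  by (induction ts) auto

lemma udb_filter: "uncertain_db db \<Longrightarrow> uncertain_db {f\<in>db. P f}"
  unfolding uncertain_db_def by auto

lemma fact_eq_split:
  assumes "fst g = R" "take k (snd g) = take k cs"
  shows "g = (R, cs) \<longleftrightarrow> drop k (snd g) = drop k cs"
proof
  assume "drop k (snd g) = drop k cs"
  hence "snd g = cs" using assms(2) by (metis append_take_drop_id)
  thus "g = (R, cs)" using assms(1) by (metis prod.collapse)
qed simp

lemma good_SE1:
  fixes q :: "('r, 'v, (nat, 'c) trm) query"
  assumes wf: "wf_query q" and q: "q = {F}" and nv: "atom_vars F = {}"
    and ys: "length ys = arity (fst F) - keylen (fst F)" "distinct ys" "set ys \<inter> (X \<union> params q) = {}"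
  shows "\<exists>\<psi>. good q X \<psi>"
proof -
  define R where "R = fst F"
  define k where "k = keylen R"
  define ts where "ts = map unC (snd F)"
  have "\<forall>t\<in>set (snd F). \<exists>c. t = Cst c"
  proof
    fix t assume t: "t \<in> set (snd F)"
    show "\<exists>c. t = Cst c"
    proof (cases t)
      case (Var y)
      hence "y \<in> atom_vars F" using t by (auto simp: atom_vars_def)
      thus ?thesis using nv by simp
    qed blast
  qed
  hence sF: "snd F = map Cst ts" unfolding ts_def by (rule all_Cst)
  have wfF: "valid_sig R" "length (snd F) = arity R"
    using wf q unfolding wf_query_def wf_atom_def R_def by auto
  hence lts: "length ts = arity R" and kar: "k \<le> arity R"
    unfolding ts_def k_def valid_sig_def by auto
  define kts where "kts = take k ts"
  define nkts where "nkts = drop k ts"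
  have par: "params q = (\<Union>t\<in>set ts. trm_fv t)"
    unfolding params_def q using sF by simp
  have fvk: "(\<Union>t\<in>set kts. trm_fv t) \<subseteq> params q" "(\<Union>t\<in>set nkts. trm_fv t) \<subseteq> params q"
    unfolding par kts_def nkts_def using set_take_subset set_drop_subset by fastforce+
  have lk: "length kts = keylen R" "length nkts = length ys"
    using lts kar ys(1) unfolding kts_def nkts_def k_def R_def by auto
  have ys': "length ys = arity R - keylen R" "set ys \<inter> (\<Union>t\<in>set kts. trm_fv t) = {}"
    using ys fvk unfolding R_def by auto
  define NE :: "('r, 'c) fo" where "NE = FExs ys (FConj (FAtom R (kts @ map Var ys)) TT)"
  define NO :: "('r, 'c) fo" where "NO = FExs ys (FConj (FAtom R (kts @ map Var ys)) (FNeg (eqs (map Var ys) nkts)))"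
  have "good q X (FConj NE (FNeg NO))"
    unfolding good_def
  proof (intro conjI allI impI)
    have "fv (eqs (map Var ys) nkts :: ('r,'c) fo) \<subseteq> set ys \<union> params q"
      using fv_eqs[of "map Var ys" nkts] fvk(2) by auto
    thus "fv (FConj NE (FNeg NO)) \<subseteq> params q"
      unfolding NE_def NO_def using fvk(1) by auto
    show "bv (FConj NE (FNeg NO)) \<inter> X = {}"
      unfolding NE_def NO_def using ys(3) by auto
    fix \<sigma> :: "nat \<Rightarrow> 'c" and db :: "('r, 'c) fact set"
    assume udb: "uncertain_db db"
    have wfdb: "\<forall>g\<in>db. wf_fact g" using udb unfolding uncertain_db_def by blast
    define cs where "cs = map (inst_trm \<sigma>) ts"
    have Q: "instq \<sigma> q = {(R, map Cst cs)}"
      unfolding instq_def q instA_def cs_def R_def by (simp add: sF comp_def)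
    have tkc: "take k cs = map (inst_trm \<sigma>) kts" "drop k cs = map (inst_trm \<sigma>) nkts"
      unfolding cs_def kts_def nkts_def by (auto simp: take_map drop_map)
    have hNE: "holds db \<sigma> NE \<longleftrightarrow> (\<exists>g\<in>db. fst g = R \<and> take k (snd g) = take k cs)"
      unfolding NE_def holds_block[OF wfdb lk(1) ys'(1) ys(2) ys'(2)] using tkc(1) unfolding k_def by simp
    have eq: "holds db (updl \<sigma> ys (drop k (snd g))) (eqs (map Var ys) nkts) \<longleftrightarrow> drop k (snd g) = drop k cs"
      if g: "g \<in> db" "fst g = R" for g
    proof -
      have lg: "length (drop k (snd g)) = length ys"
        using wfdb g ys'(1) unfolding wf_fact_def k_def by auto
      have m1: "map (inst_trm (updl \<sigma> ys (drop k (snd g)))) nkts = map (inst_trm \<sigma>) nkts"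
      proof (intro map_inst_trm_cong ballI)
        fix z assume "z \<in> (\<Union>t\<in>set nkts. trm_fv t)"
        hence "z \<notin> set ys" using ys(3) fvk(2) by blast
        thus "updl \<sigma> ys (drop k (snd g)) z = \<sigma> z" by (rule updl_out)
      qed
      have m2: "map (inst_trm (updl \<sigma> ys (drop k (snd g)))) (map Var ys) = drop k (snd g)"
        using updl_map[OF ys(2) lg] by (simp add: comp_def)
      have ll: "length (map Var ys) = length nkts" using lk(2) by simp
      show ?thesis
        unfolding holds_eqs[OF ll] m1 m2 tkc(2) by (rule refl)
    qed
    have hNO: "holds db \<sigma> NO \<longleftrightarrow> (\<exists>g\<in>db. fst g = R \<and> take k (snd g) = take k cs \<and> g \<noteq> (R, cs))"
    proof -
      have pt: "(fst g = R \<and> take k (snd g) = take k cs \<and> \<not> holds db (updl \<sigma> ys (drop k (snd g))) (eqs (map Var ys) nkts))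
         \<longleftrightarrow> (fst g = R \<and> take k (snd g) = take k cs \<and> g \<noteq> (R, cs))" if "g \<in> db" for g
        using eq[OF that] fact_eq_split[of g R k cs] by blast
      show ?thesis
        unfolding NO_def holds_block[OF wfdb lk(1) ys'(1) ys(2) ys'(2)] holds.simps(3)
          k_def[symmetric] tkc(1)[symmetric]
        by (rule bex_cong[OF refl]) (rule pt)
    qed
    show "db \<in> CERTAINTY (instq \<sigma> q) \<longleftrightarrow> holds db \<sigma> (FConj NE (FNeg NO))"
      unfolding CERTAINTY_def using se1_sem[OF udb Q] udb hNE hNO unfolding k_def by auto
  qed
  thus ?thesis by blast
qed





lemma good_SE4:
  fixes q :: "('r, 'v, (nat, 'c) trm) query"
  assumes wf: "wf_query q" and F: "F \<in> q" and kF: "key_vars F = {}"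
    and i: "i < length (snd F)" "snd F ! i = Var x"
    and n: "n \<notin> params q" "n \<notin> X"
    and ys: "length ys = arity (fst F) - keylen (fst F)" "distinct ys"
      "set ys \<inter> (X \<union> params q \<union> {n}) = {}"
    and g: "good (subst_query x (Var n) q) (X \<union> {n} \<union> params q) \<phi>"
  shows "\<exists>\<psi>. good q X \<psi>"
proof -
  define R where "R = fst F"
  define k where "k = keylen R"
  have wfF: "valid_sig R" "length (snd F) = arity R"
    using wf F unfolding wf_query_def wf_atom_def R_def by auto
  hence kar: "k \<le> arity R" unfolding k_def valid_sig_def by auto
  have ki: "k \<le> i"
  proof (rule ccontr)
    assume "\<not> k \<le> i"
    hence "Var x \<in> set (take k (snd F))" using i by (auto simp: in_set_conv_nth intro!: exI[of _ i])
    hence "x \<in> key_vars F" unfolding key_vars_def k_def R_def by simp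
    thus False using kF by simp
  qed
  have "\<forall>t\<in>set (take k (snd F)). \<exists>c. t = Cst c"
  proof
    fix t assume t: "t \<in> set (take k (snd F))"
    show "\<exists>c. t = Cst c"
    proof (cases t)
      case (Var y)
      hence "y \<in> key_vars F" using t unfolding key_vars_def k_def R_def by simp
      thus ?thesis using kF by simp
    qed blast
  qed
  define kts where "kts = map unC (take k (snd F))"
  have tk: "take k (snd F) = map Cst kts" unfolding kts_def by (rule all_Cst) fact
  have "length (take k (snd F)) = k" using kar wfF(2) by simp
  hence lkts: "length kts = keylen R" unfolding kts_def k_def by simp
  have fvk: "(\<Union>t\<in>set kts. trm_fv t) \<subseteq> params q"
  proof
    fix z assume "z \<in> (\<Union>t\<in>set kts. trm_fv t)"
    then obtain t where t: "t \<in> set kts" "z \<in> trm_fv t" by blast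
    hence "Cst t \<in> set (take k (snd F))" unfolding tk by simp
    hence "Cst t \<in> set (snd F)" using set_take_subset by fast
    moreover have "z \<in> tpar (Cst t)" using t(2) by simp
    ultimately show "z \<in> params q" using F unfolding params_def by blast
  qed
  have ys': "length ys = arity R - keylen R" "set ys \<inter> (\<Union>t\<in>set kts. trm_fv t) = {}"
    using ys fvk unfolding R_def by auto
  define j where "j = i - k"
  have j: "j < length ys" "k + j = i" using i(1) ki wfF(2) ys(1) unfolding j_def k_def R_def by auto
  define gd :: "'r relname \<Rightarrow> (nat, 'c) trm list \<Rightarrow> ('r, 'c) fo" where
    "gd R' ts = (if R' = R \<and> length ts = arity R then FImp (eqs (take k ts) kts) (FEq (ts ! i) (Var n)) else TT)"
    for R' ts
  define P where "P \<sigma> f = (fst f = R \<and> length (snd f) = arity R \<and> take k (snd f) = map (inst_trm \<sigma>) kts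
      \<longrightarrow> snd f ! i = \<sigma> n)" for \<sigma> :: "nat \<Rightarrow> 'c" and f :: "('r, 'c) fact"
  define NE :: "('r, 'c) fo" where "NE = FExs ys (FConj (FAtom R (kts @ map Var ys)) TT)"
  define EB :: "('r, 'c) fo" where "EB = FExs ys (FConj (FAtom R (kts @ map Var ys)) (FEq (Var (ys ! j)) (Var n)))"
  define \<psi> where "\<psi> = FConj NE (FAll n (FImp EB (restr gd \<phi>)))"
  have gdfv: "fv (gd R' ts) \<subseteq> (\<Union>t\<in>set ts. trm_fv t) \<union> (insert n (\<Union>t\<in>set kts. trm_fv t))" for R' ts
  proof (cases "R' = R \<and> length ts = arity R")
    case True
    have "ts ! i \<in> set ts" using True i(1) wfF(2) by simp
    moreover have "fv (eqs (take k ts) kts :: ('r,'c) fo) \<subseteq> (\<Union>t\<in>set (take k ts). trm_fv t) \<union> (\<Union>t\<in>set kts. trm_fv t)"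
      by (rule fv_eqs)
    moreover have "(\<Union>t\<in>set (take k ts). trm_fv t) \<subseteq> (\<Union>t\<in>set ts. trm_fv t)"
      by (rule UN_mono[OF set_take_subset order_refl])
    moreover have "fv (gd R' ts) = fv (eqs (take k ts) kts :: ('r,'c) fo) \<union> trm_fv (ts ! i) \<union> {n}"
      using True unfolding gd_def by simp
    ultimately show ?thesis by blast
  next
    case False
    hence "gd R' ts = TT" unfolding gd_def by (rule if_not_P)
    thus ?thesis by simp
  qed
  have gdbv: "bv (gd R' ts) = {}" for R' ts by (simp add: gd_def)
  have "fv \<phi> \<subseteq> params (subst_query x (Var n) q)" "bv \<phi> \<inter> (X \<union> {n} \<union> params q) = {}"
    using g unfolding good_def by blast+
  hence gX: "fv \<phi> \<subseteq> params q \<union> {n}" "bv \<phi> \<inter> (X \<union> {n} \<union> params q) = {}"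
    using params_subst[of x n q] by blast+
  have "good q X \<psi>"
    unfolding good_def
  proof (intro conjI allI impI)
    have "fv (restr gd \<phi>) \<subseteq> fv \<phi> \<union> insert n (\<Union>t\<in>set kts. trm_fv t)"
      by (rule fv_restr) (rule gdfv)
    moreover have "ys ! j \<in> set ys" using j by simp
    ultimately show "fv \<psi> \<subseteq> params q"
      unfolding \<psi>_def NE_def EB_def using fvk gX(1) by auto
    have "bv (restr gd \<phi>) = bv \<phi>" by (rule bv_restr) (rule gdbv)
    thus "bv \<psi> \<inter> X = {}"
      unfolding \<psi>_def NE_def EB_def using ys(3) gX(2) n(2) by auto
    fix \<sigma> :: "nat \<Rightarrow> 'c" and db :: "('r, 'c) fact set"
    assume udb: "uncertain_db db"
    have wfdb: "\<forall>g\<in>db. wf_fact g" using udb unfolding uncertain_db_def by blast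
    define kc where "kc = map (inst_trm \<sigma>) kts"
    define inB where "inB = (\<lambda>g :: ('r,'c) fact. fst g = R \<and> take (keylen R) (snd g) = kc)"
    define Q where "Q = instq \<sigma> q"
    have FQ: "instA \<sigma> F \<in> Q" unfolding Q_def instq_def using F by simp
    have FR: "fst (instA \<sigma> F) = R" unfolding instA_def R_def by simp
    have Fk: "take (keylen R) (snd (instA \<sigma> F)) = map Cst kc"
      unfolding instA_def kc_def k_def[symmetric] by (simp add: take_map tk comp_def)
    have Fi: "i < length (snd (instA \<sigma> F))" "snd (instA \<sigma> F) ! i = Var x"
      unfolding instA_def using i by auto
    have S: "(\<forall>r. is_repair db r \<longrightarrow> satisfies r Q) \<longleftrightarrow>
      (\<exists>g\<in>db. inB g) \<and> (\<forall>c. (\<exists>g\<in>db. inB g \<and> snd g ! i = c) \<longrightarrow>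
        (\<forall>r. is_repair {g\<in>db. inB g \<longrightarrow> snd g ! i = c} r \<longrightarrow> satisfies r (subst_query x c Q)))"
      using se4_sem[OF udb FQ FR Fk Fi] unfolding inB_def by simp
    have kc': "map (inst_trm (\<sigma>(n:=c))) kts = kc" for c
      unfolding kc_def using fvk n(1) by (intro map_inst_trm_cong) auto
    have hNE: "holds db \<sigma> NE \<longleftrightarrow> (\<exists>g\<in>db. inB g)"
      unfolding NE_def holds_block[OF wfdb lkts ys'(1) ys(2) ys'(2)] inB_def kc_def by simp
    have hEB: "holds db (\<sigma>(n:=c)) EB \<longleftrightarrow> (\<exists>g\<in>db. inB g \<and> snd g ! i = c)" for c
    proof -
      have uf: "updl (\<sigma>(n:=c)) ys (drop k (snd g)) (ys ! j) = snd g ! i \<and> updl (\<sigma>(n:=c)) ys (drop k (snd g)) n = c"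
        if "g \<in> db" "fst g = R" for g
      proof
        have lg: "length (drop k (snd g)) = length ys"
          using wfdb that ys'(1) unfolding wf_fact_def k_def by auto
        have "updl (\<sigma>(n:=c)) ys (drop k (snd g)) (ys ! j) = map (updl (\<sigma>(n:=c)) ys (drop k (snd g))) ys ! j"
          using j by simp
        also have "\<dots> = drop k (snd g) ! j" using updl_map[OF ys(2) lg] by simp
        also have "\<dots> = snd g ! i" using j lg kar wfdb that unfolding wf_fact_def by auto
        finally show "updl (\<sigma>(n:=c)) ys (drop k (snd g)) (ys ! j) = snd g ! i" .
        have "n \<notin> set ys" using ys(3) by auto
        thus "updl (\<sigma>(n:=c)) ys (drop k (snd g)) n = c" by (simp add: updl_out)
      qed
      have pt: "(fst g = R \<and> take k (snd g) = kc \<and>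
          holds db (updl (\<sigma>(n:=c)) ys (drop k (snd g))) (FEq (Var (ys ! j)) (Var n)))
          \<longleftrightarrow> (inB g \<and> snd g ! i = c)" if "g \<in> db" for g
        using that uf[OF that] unfolding inB_def k_def by auto
      show ?thesis
        unfolding EB_def holds_block[OF wfdb lkts ys'(1) ys(2) ys'(2)] kc' k_def[symmetric]
        by (rule bex_cong[OF refl]) (rule pt)
    qed
    have gsem: "holds db \<sigma>' (gd R' ts) \<longleftrightarrow> P \<sigma>' (R', map (inst_trm \<sigma>') ts)" for \<sigma>' R' ts
    proof (cases "R' = R \<and> length ts = arity R")
      case True
      have lt: "length (take k ts) = length kts" using True kar lkts unfolding k_def by simp
      have e1: "map (inst_trm \<sigma>') (take k ts) = take k (map (inst_trm \<sigma>') ts)" by (rule take_map[symmetric])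
      have e2: "inst_trm \<sigma>' (ts ! i) = map (inst_trm \<sigma>') ts ! i" using True i(1) wfF(2) by simp
      have e3: "length (map (inst_trm \<sigma>') ts) = arity R" using True by simp
      have gdT: "gd R' ts = FImp (eqs (take k ts) kts) (FEq (ts ! i) (Var n))"
        unfolding gd_def using True by (rule if_P)
      show ?thesis
        unfolding gdT FImp_simps holds_eqs[OF lt] holds.simps inst_trm.simps e1 e2 P_def fst_conv snd_conv
        using True e3 by blast
    next
      case False
      have gdF: "gd R' ts = TT" unfolding gd_def using False by (rule if_not_P)
      show ?thesis unfolding gdF P_def using False by auto
    qed
    have inv: "P (\<sigma>'(y:=d)) = P \<sigma>'" if "y \<in> bv \<phi>" for y \<sigma>' d
    proof -
      have yn: "y \<noteq> n" "y \<notin> (\<Union>t\<in>set kts. trm_fv t)" using that gX(2) fvk by auto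
      have mk: "map (inst_trm (\<sigma>'(y:=d))) kts = map (inst_trm \<sigma>') kts"
        using yn(2) by (intro map_inst_trm_cong) auto
      show ?thesis unfolding P_def mk using yn(1) by (intro ext) simp
    qed
    have gs: "\<forall>\<sigma> db. uncertain_db db \<longrightarrow> (db \<in> CERTAINTY (instq \<sigma> (subst_query x (Var n) q)) \<longleftrightarrow> holds db \<sigma> \<phi>)"
      using g unfolding good_def by blast
    have hR: "holds db (\<sigma>(n:=c)) (restr gd \<phi>) \<longleftrightarrow>
        (\<forall>r. is_repair {g\<in>db. inB g \<longrightarrow> snd g ! i = c} r \<longrightarrow> satisfies r (subst_query x c Q))" for c
    proof -
      have Peq: "P (\<sigma>(n:=c)) f \<longleftrightarrow> (inB f \<longrightarrow> snd f ! i = c)" if f: "f \<in> db" for f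
      proof -
        have "length (snd f) = arity (fst f)" using wfdb f unfolding wf_fact_def by blast
        thus ?thesis unfolding P_def inB_def kc' k_def by auto
      qed
      have "holds db (\<sigma>(n:=c)) (restr gd \<phi>) \<longleftrightarrow> holds {f\<in>db. P (\<sigma>(n:=c)) f} (\<sigma>(n:=c)) \<phi>"
        by (rule holds_restr[of db gd P]) (rule gsem, erule inv)
      also have "{f\<in>db. P (\<sigma>(n:=c)) f} = {g\<in>db. inB g \<longrightarrow> snd g ! i = c}"
        using Peq by blast
      also have "holds {g\<in>db. inB g \<longrightarrow> snd g ! i = c} (\<sigma>(n:=c)) \<phi> \<longleftrightarrow>
          {g\<in>db. inB g \<longrightarrow> snd g ! i = c} \<in> CERTAINTY (instq (\<sigma>(n:=c)) (subst_query x (Var n) q))"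
        by (rule gs[rule_format, where \<sigma>="\<sigma>(n:=c)", OF udb_filter[OF udb], symmetric])
      also have "instq (\<sigma>(n:=c)) (subst_query x (Var n) q) = subst_query x c Q"
        unfolding instq_subst instq_fresh[OF n(1)] Q_def by simp
      also have "{g\<in>db. inB g \<longrightarrow> snd g ! i = c} \<in> CERTAINTY (subst_query x c Q) \<longleftrightarrow>
          (\<forall>r. is_repair {g\<in>db. inB g \<longrightarrow> snd g ! i = c} r \<longrightarrow> satisfies r (subst_query x c Q))"
        unfolding CERTAINTY_def using udb_filter[OF udb] by simp
      finally show ?thesis .
    qed
    have "db \<in> CERTAINTY (instq \<sigma> q) \<longleftrightarrow> (\<forall>r. is_repair db r \<longrightarrow> satisfies r Q)"
      unfolding CERTAINTY_def Q_def using udb by simp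
    also note S
    also have "(\<exists>g\<in>db. inB g) \<and> (\<forall>c. (\<exists>g\<in>db. inB g \<and> snd g ! i = c) \<longrightarrow>
        (\<forall>r. is_repair {g\<in>db. inB g \<longrightarrow> snd g ! i = c} r \<longrightarrow> satisfies r (subst_query x c Q)))
      \<longleftrightarrow> holds db \<sigma> \<psi>"
      unfolding \<psi>_def holds.simps FAll_simps FImp_simps hNE hEB hR ..
    finally show "db \<in> CERTAINTY (instq \<sigma> q) \<longleftrightarrow> holds db \<sigma> \<psi>" .
  qed
  thus ?thesis by blast
qed



lemma image_filter_eq: "A \<subseteq> f ` q \<Longrightarrow> f ` {F\<in>q. f F \<in> A} = A"
  by blast

lemma main:
  fixes q0 :: "('r, 'v, 'c0) query"
  assumes "is_safe q0"
  shows "\<forall>(q :: ('r, 'v, (nat, 'c) trm) query) X. shape q = shape q0 \<and> wf_query q \<and> self_join_free q \<and> finite X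
           \<longrightarrow> (\<exists>\<phi>. good q X \<phi>)"
  using assms
proof (induction q0 rule: is_safe.induct)
  case (SE1 q0)
  show ?case
  proof (intro allI impI)
    fix q :: "('r, 'v, (nat, 'c) trm) query" and X :: "nat set"
    assume H: "shape q = shape q0 \<and> wf_query q \<and> self_join_free q \<and> finite X"
    have c1: "card q0 = 1" "query_vars q0 = {}" using SE1 unfolding SE1_cond_def by auto
    then obtain F0 where q0: "q0 = {F0}" by (auto simp: card_Suc_eq)
    have sq: "shape q = {ashape F0}" using H q0 unfolding shape_def by simp
    hence "ashape F0 \<in> ashape ` q" unfolding shape_def by simp
    then obtain F where F: "F \<in> q" "ashape F = ashape F0" by (metis imageE)
    have "G = F" if "G \<in> q" for G
    proof -
      have "ashape G = ashape F0" using that sq unfolding shape_def by auto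
      hence "fst G = fst F" using F(2) by (metis fst_ashape)
      thus ?thesis using H that F(1) unfolding self_join_free_def by blast
    qed
    hence qF: "q = {F}" using F(1) by blast
    have nv: "atom_vars F = {}" using c1(2) F(2) unfolding q0 query_vars_def atom_vars_shape by simp
    have fin: "finite (X \<union> params q)" using H finite_params by blast
    obtain ys :: "nat list" where ys: "length ys = arity (fst F) - keylen (fst F)" "distinct ys"
      "set ys \<inter> (X \<union> params q) = {}"
      using fresh_list[OF fin] by blast
    have wfq: "wf_query q" using H by blast
    show "\<exists>\<phi>. good q X \<phi>" by (rule good_SE1[OF wfq qF nv ys])
  qed
next
  case (SE2 q0 q1 q2)
  show ?case
  proof (intro allI impI)
    fix q :: "('r, 'v, (nat, 'c) trm) query" and X :: "nat set"
    assume H: "shape q = shape q0 \<and> wf_query q \<and> self_join_free q \<and> finite X"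
    define qa where "qa = {F\<in>q. ashape F \<in> shape q1}"
    define qb where "qb = {F\<in>q. ashape F \<in> shape q2}"
    have s0: "shape q0 = shape q1 \<union> shape q2" using SE2.hyps(2) unfolding shape_def by auto
    have "shape q1 \<subseteq> ashape ` q" "shape q2 \<subseteq> ashape ` q" using H s0 unfolding shape_def by auto
    hence sa: "shape qa = shape q1" and sb: "shape qb = shape q2"
      unfolding qa_def qb_def shape_def by (simp_all add: image_filter_eq shape_def)
    have qq: "q = qa \<union> qb" using H s0 unfolding qa_def qb_def shape_def by auto
    have dv: "query_vars qa \<inter> query_vars qb = {}"
      using SE2.hyps(5) unfolding query_vars_shape sa sb .
    have sub: "qa \<subseteq> q" "qb \<subseteq> q" unfolding qa_def qb_def by auto
    have wfs1: "wf_query qa" "wf_query qb"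
      using H sub unfolding wf_query_def by (auto dest: finite_subset)
    have sj: "self_join_free q" using H by blast
    have wfs2: "self_join_free qa" "self_join_free qb"
      using sj sub unfolding self_join_free_def by blast+
    note wfs = wfs1 wfs2
    have fX: "finite X" using H by blast
    obtain \<phi>a where "good qa X \<phi>a" using SE2.IH(1)[rule_format, of qa X] fX sa wfs by blast
    moreover obtain \<phi>b where "good qb X \<phi>b" using SE2.IH(2)[rule_format, of qb X] fX sb wfs by blast
    ultimately show "\<exists>\<phi>. good q X \<phi>" using good_SE2[OF qq dv] by blast
  qed
next
  case (SE3 q0 x a)
  show ?case
  proof (intro allI impI)
    fix q :: "('r, 'v, (nat, 'c) trm) query" and X :: "nat set"
    assume H: "shape q = shape q0 \<and> wf_query q \<and> self_join_free q \<and> finite X"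
    have fin: "finite (X \<union> params q)" using H finite_params by blast
    obtain n where n: "n \<notin> X \<union> params q" using fresh_var[OF fin] by blast
    have sq: "shape q = shape q0" and wq: "wf_query q" and sjq0: "self_join_free q" and fXX: "finite X"
      using H by blast+
    have sh: "shape (subst_query x (Var n) q) = shape (subst_query x a q0)"
      unfolding shape_subst sq ..
    have w: "wf_query (subst_query x (Var n) q)" by (rule wf_subst[OF wq])
    have sj: "self_join_free (subst_query x (Var n) q)" by (rule sjf_subst[OF sjq0])
    have fX: "finite (insert n X)" using fXX by (rule finite.insertI)
    obtain \<phi> where gp: "good (subst_query x (Var n) q) (insert n X) \<phi>"
      using SE3.IH[rule_format, of "subst_query x (Var n) q" "insert n X"] sh w sj fX by blast
    have kx: "\<forall>F\<in>q. x \<in> key_vars F"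
    proof
      fix F assume "F \<in> q"
      hence "ashape F \<in> shape q0" using H unfolding shape_def by auto
      then obtain F0 where "F0 \<in> q0" "ashape F = ashape F0" unfolding shape_def by auto
      thus "x \<in> key_vars F" using SE3.hyps(4) unfolding key_vars_shape by auto
    qed
    have sjq: "self_join_free q" using H by blast
    have n1: "n \<notin> params q" "n \<notin> X" using n by auto
    show "\<exists>\<phi>. good q X \<phi>" by (rule exI, rule good_SE3[OF sjq kx n1 gp])
  qed
next
  case (SE4 q0 F0 x a)
  show ?case
  proof (intro allI impI)
    fix q :: "('r, 'v, (nat, 'c) trm) query" and X :: "nat set"
    assume H: "shape q = shape q0 \<and> wf_query q \<and> self_join_free q \<and> finite X"
    have "ashape F0 \<in> shape q" using H SE4.hyps(4) unfolding shape_def by auto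
    then obtain F where F: "F \<in> q" "ashape F = ashape F0" unfolding shape_def by auto
    have kF: "key_vars F = {}" using F(2) SE4.hyps(5) unfolding key_vars_shape by simp
    have "x \<in> atom_vars F" using F(2) SE4.hyps(6) unfolding atom_vars_shape by simp
    then obtain i where i: "i < length (snd F)" "snd F ! i = Var x"
      unfolding atom_vars_def by (auto simp: in_set_conv_nth)
    have fin: "finite (X \<union> params q)" using H finite_params by blast
    obtain n where n: "n \<notin> X \<union> params q" using fresh_var[OF fin] by blast
    have fin2: "finite (X \<union> params q \<union> {n})" using fin by simp
    obtain ys :: "nat list" where ys: "length ys = arity (fst F) - keylen (fst F)" "distinct ys"
      "set ys \<inter> (X \<union> params q \<union> {n}) = {}"
      using fresh_list[OF fin2] by blast
    have sq: "shape q = shape q0" and wq: "wf_query q" and sjq0: "self_join_free q" and fXX: "finite X"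
      using H by blast+
    have sh: "shape (subst_query x (Var n) q) = shape (subst_query x a q0)"
      unfolding shape_subst sq ..
    have fin3: "finite (X \<union> {n} \<union> params q)" using fin by simp
    have w: "wf_query (subst_query x (Var n) q)" by (rule wf_subst[OF wq])
    have sj: "self_join_free (subst_query x (Var n) q)" by (rule sjf_subst[OF sjq0])
    obtain \<phi> where gp: "good (subst_query x (Var n) q) (X \<union> {n} \<union> params q) \<phi>"
      using SE4.IH[rule_format, of "subst_query x (Var n) q" "X \<union> {n} \<union> params q"] sh w sj fin3 by blast
    have wfq: "wf_query q" using H by blast
    have n1: "n \<notin> params q" "n \<notin> X" using n by auto
    show "\<exists>\<phi>. good q X \<phi>"
      by (rule good_SE4[OF wfq F(1) kF i n1 ys gp])
  qed
qed

fun liftT :: "('v, 'c) trm \<Rightarrow> ('v, (nat, 'c) trm) trm" where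
  "liftT (Var v) = Var v"
| "liftT (Cst c) = Cst (Cst c)"

theorem theorem6:
  fixes q :: "('r, 'v, 'c) query"
  assumes "wf_query q"
    and "self_join_free q"
    and "is_safe q"
  shows "fo_expressible q"
proof -
  define lq :: "('r, 'v, (nat, 'c) trm) query" where "lq = (\<lambda>F. (fst F, map liftT (snd F))) ` q"
  have tl: "tsh (liftT t) = tsh t" "tpar (liftT t) = {}" "instT \<sigma> (liftT t) = t" for t :: "('v, 'c) trm" and \<sigma>
    by (cases t; simp)+
  have "shape lq = shape q" unfolding lq_def shape_def image_image ashape_def
    by (simp add: comp_def tl)
  moreover have "wf_query lq" using assms(1) unfolding lq_def wf_query_def wf_atom_def by auto
  moreover have "self_join_free lq" unfolding lq_def by (rule sjf_image[OF assms(2)]) simp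
  ultimately obtain \<phi> :: "('r, 'c) fo" where g: "good lq {} \<phi>"
    using main[OF assms(3)] by blast
  have pl: "params lq = {}" unfolding params_def lq_def by (simp add: tl)
  have il: "instq \<sigma> lq = q" for \<sigma>
    unfolding instq_def lq_def image_image instA_def by (simp add: comp_def tl)
  have "sentence \<phi>" using g pl unfolding good_def sentence_def by auto
  moreover have "db \<in> CERTAINTY q \<longleftrightarrow> models db \<phi>" if "uncertain_db db" for db
    using g that unfolding good_def il models_def by blast
  ultimately show ?thesis unfolding fo_expressible_def by blast
qed


end
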